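(* Let $G$ be a finite simple graph with $\tau(G) > 2\nu(G)$ such that every proper subgraph $H$ of $G$ satisfies $\tau(H) \leq 2\nu(H)$ (a minimal counterexample to Tuza's Conjecture). Then $G$ is robust.
   Context: $\nu(G)$ is the maximum number of pairwise edge-disjoint triangles in $G$; $\tau(G)$ is the minimum size of an edge set $Y$ with $G-Y$ triangle-free. A graph $G$ is robust if for every $v \in V(G)$, every connected component of the induced subgraph $G[N(v)]$ on the neighborhood of $v$ has at least $5$ vertices. *)

theory Defs
  imports Main
begin

definition simple_graph :: "'a set \<Rightarrow> 'a set set \<Rightarrow> bool" where
  "simple_graph V E \<longleftrightarrow> finite V \<and> (\<forall>e\<in>E. e \<subseteq> V \<and> card e = 2)"

text \<open>A triangle of an edge set E, represented by its set of three edges.\<close>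
definition triangles :: "'a set set \<Rightarrow> 'a set set set" where
  "triangles E = {{{a,b},{b,c},{a,c}} | a b c.
      a \<noteq> b \<and> b \<noteq> c \<and> a \<noteq> c \<and> {a,b} \<in> E \<and> {b,c} \<in> E \<and> {a,c} \<in> E}"

definition triangle_free :: "'a set set \<Rightarrow> bool" where
  "triangle_free E \<longleftrightarrow> triangles E = {}"

definition tri_packing_num :: "'a set set \<Rightarrow> nat" where
  "tri_packing_num E = Max {card P | P. P \<subseteq> triangles E \<and>
      (\<forall>S\<in>P. \<forall>T\<in>P. S \<noteq> T \<longrightarrow> S \<inter> T = {})}"

definition tri_cover_num :: "'a set set \<Rightarrow> nat" where
  "tri_cover_num E = Min {card Y | Y. Y \<subseteq> E \<and> triangle_free (E - Y)}"

definition subgraph :: "'a set \<Rightarrow> 'a set set \<Rightarrow> 'a set \<Rightarrow> 'a set set \<Rightarrow> bool" where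
  "subgraph V' E' V E \<longleftrightarrow> V' \<subseteq> V \<and> E' \<subseteq> E \<and> (\<forall>e\<in>E'. e \<subseteq> V')"

definition proper_subgraph :: "'a set \<Rightarrow> 'a set set \<Rightarrow> 'a set \<Rightarrow> 'a set set \<Rightarrow> bool" where
  "proper_subgraph V' E' V E \<longleftrightarrow> subgraph V' E' V E \<and> (V', E') \<noteq> (V, E)"

definition nbhd :: "'a set set \<Rightarrow> 'a \<Rightarrow> 'a set" where
  "nbhd E v = {u. {u, v} \<in> E}"

definition induced_edges :: "'a set set \<Rightarrow> 'a set \<Rightarrow> 'a set set" where
  "induced_edges E S = {e \<in> E. e \<subseteq> S}"

definition connected_in :: "'a set \<Rightarrow> 'a set set \<Rightarrow> 'a \<Rightarrow> 'a \<Rightarrow> bool" where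
  "connected_in S F x y \<longleftrightarrow> x \<in> S \<and> y \<in> S \<and>
     (x, y) \<in> ({(u, w). {u, w} \<in> F \<and> u \<in> S \<and> w \<in> S})\<^sup>*"

definition component :: "'a set \<Rightarrow> 'a set set \<Rightarrow> 'a \<Rightarrow> 'a set" where
  "component S F x = {y. connected_in S F x y}"

definition robust :: "'a set \<Rightarrow> 'a set set \<Rightarrow> bool" where
  "robust V E \<longleftrightarrow> (\<forall>v\<in>V. \<forall>x\<in>nbhd E v.
      card (component (nbhd E v) (induced_edges E (nbhd E v)) x) \<ge> 5)"

end

theory Submission
  imports Defs
begin


lemma sg_finite_E: "simple_graph V E \<Longrightarrow> finite E"
  unfolding simple_graph_def by (meson Pow_iff finite_Pow_iff rev_finite_subset subsetI)

lemma triangles_sub: "T \<in> triangles E \<Longrightarrow> T \<subseteq> E"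
  unfolding triangles_def by auto

lemma triangles_ne: "T \<in> triangles E \<Longrightarrow> T \<noteq> {}"
  unfolding triangles_def by auto

lemma triangles_mono: "E' \<subseteq> E \<Longrightarrow> triangles E' \<subseteq> triangles E"
  unfolding triangles_def by blast

lemma finite_triangles: "finite E \<Longrightarrow> finite (triangles E)"
  by (meson finite_Pow_iff PowI rev_finite_subset subsetI triangles_sub)

lemma tau_ex: assumes "finite E"
  shows "\<exists>Y. Y \<subseteq> E \<and> triangle_free (E - Y) \<and> card Y = tri_cover_num E"
proof -
  let ?A = "{card Y | Y. Y \<subseteq> E \<and> triangle_free (E - Y)}"
  have "?A = card ` {Y. Y \<subseteq> E \<and> triangle_free (E - Y)}" by auto
  moreover have "finite {Y. Y \<subseteq> E \<and> triangle_free (E - Y)}"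
    using assms by (simp add: finite_subset)
  ultimately have fin: "finite ?A" by simp
  have "card E \<in> ?A" unfolding triangle_free_def triangles_def by auto
  hence "Min ?A \<in> ?A" using fin Min_in by blast
  thus ?thesis unfolding tri_cover_num_def by auto
qed

lemma tau_le: assumes "finite E" "Y \<subseteq> E" "triangle_free (E - Y)"
  shows "tri_cover_num E \<le> card Y"
proof -
  let ?A = "{card Y | Y. Y \<subseteq> E \<and> triangle_free (E - Y)}"
  have "?A = card ` {Y. Y \<subseteq> E \<and> triangle_free (E - Y)}" by auto
  moreover have "finite {Y. Y \<subseteq> E \<and> triangle_free (E - Y)}"
    using assms by (simp add: finite_subset)
  ultimately have fin: "finite ?A" by simp
  show ?thesis unfolding tri_cover_num_def using fin assms by (auto intro: Min_le)
qed

definition packing where "packing E P \<longleftrightarrow> P \<subseteq> triangles E \<and>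
      (\<forall>S\<in>P. \<forall>T\<in>P. S \<noteq> T \<longrightarrow> S \<inter> T = {})"

lemma nu_fin: assumes "finite E"
  shows "finite {card P | P. P \<subseteq> triangles E \<and> (\<forall>S\<in>P. \<forall>T\<in>P. S \<noteq> T \<longrightarrow> S \<inter> T = {})}"
proof -
  have "{card P | P. P \<subseteq> triangles E \<and> (\<forall>S\<in>P. \<forall>T\<in>P. S \<noteq> T \<longrightarrow> S \<inter> T = {})}
     \<subseteq> card ` Pow (triangles E)" by auto
  thus ?thesis using finite_triangles[OF assms] by (meson finite_Pow_iff finite_imageI rev_finite_subset)
qed

lemma nu_ex: assumes "finite E"
  shows "\<exists>P. packing E P \<and> card P = tri_packing_num E"
proof -
  let ?A = "{card P | P. P \<subseteq> triangles E \<and> (\<forall>S\<in>P. \<forall>T\<in>P. S \<noteq> T \<longrightarrow> S \<inter> T = {})}"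
  have "card {} \<in> ?A" by (intro CollectI exI[of _ "{}"]) simp
  hence ne: "?A \<noteq> {}" by blast
  have "Max ?A \<in> ?A" by (rule Max_in[OF nu_fin[OF assms] ne])
  then obtain P where "packing E P" "Max ?A = card P" unfolding packing_def by blast
  thus ?thesis unfolding tri_packing_num_def by metis
qed

lemma nu_ge: assumes "finite E" "packing E P"
  shows "card P \<le> tri_packing_num E"
  unfolding tri_packing_num_def using nu_fin[OF assms(1)] assms(2)
  by (auto simp: packing_def intro!: Max_ge)

lemma reduce:
  fixes V :: "'a set" and E :: "'a set set"
  assumes sg: "simple_graph V E"
    and A2: "tri_cover_num E > 2 * tri_packing_num E"
    and A3: "\<And>V' E'. proper_subgraph V' E' V E \<Longrightarrow> tri_cover_num E' \<le> 2 * tri_packing_num E'"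
    and SE: "S \<subseteq> E" and Sne: "S \<noteq> {}"
    and P0: "packing E P0" and P0S: "\<forall>T\<in>P0. T \<subseteq> S"
    and XE: "X \<subseteq> E" and Xc: "card X \<le> 2 * card P0"
    and cover: "\<And>p q w. {p,q} \<in> S \<Longrightarrow> p \<noteq> q \<Longrightarrow> {p,w} \<in> E \<Longrightarrow> {q,w} \<in> E \<Longrightarrow> w \<noteq> p \<Longrightarrow> w \<noteq> q
        \<Longrightarrow> {p,q} \<in> X \<or> {q,w} \<in> X \<or> {p,w} \<in> X"
  shows False
proof -
  have fE: "finite E" using sg_finite_E[OF sg] .
  define E' where "E' = E - S"
  have fE': "finite E'" using fE E'_def by simp
  have "proper_subgraph V E' V E"
    using sg SE Sne unfolding proper_subgraph_def subgraph_def simple_graph_def E'_def by auto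
  hence h1: "tri_cover_num E' \<le> 2 * tri_packing_num E'" by (rule A3)
  obtain Y where Y: "Y \<subseteq> E'" "triangle_free (E' - Y)" "card Y = tri_cover_num E'"
    using tau_ex[OF fE'] by blast
  have tf: "triangle_free (E - (Y \<union> X))"
    unfolding triangle_free_def
  proof (rule ccontr)
    assume "triangles (E - (Y \<union> X)) \<noteq> {}"
    then obtain a b c where abc0: "a \<noteq> b" "b \<noteq> c" "a \<noteq> c" "{a,b} \<in> E - (Y \<union> X)"
        "{b,c} \<in> E - (Y \<union> X)" "{a,c} \<in> E - (Y \<union> X)"
      unfolding triangles_def by blast
    have c1: "{b,a} = {a,b}" "{c,a} = {a,c}" "{c,b} = {b,c}" by auto
    note abc = abc0 c1
    have "{a,b} \<notin> S"
    proof
      assume "{a,b} \<in> S"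
      from cover[OF this abc(1), of c] abc show False by simp
    qed
    moreover have "{b,c} \<notin> S"
    proof
      assume "{b,c} \<in> S"
      from cover[OF this abc(2), of a] abc show False by simp
    qed
    moreover have "{a,c} \<notin> S"
    proof
      assume "{a,c} \<in> S"
      from cover[OF this abc(3), of b] abc show False by simp
    qed
    ultimately have "{{a,b},{b,c},{a,c}} \<in> triangles (E' - Y)"
      using abc unfolding triangles_def E'_def by blast
    thus False using Y(2) unfolding triangle_free_def by blast
  qed
  have "Y \<union> X \<subseteq> E" using Y(1) XE E'_def by auto
  hence "tri_cover_num E \<le> card (Y \<union> X)" using tau_le[OF fE _ tf] by blast
  also have "\<dots> \<le> card Y + card X" by (rule card_Un_le)
  finally have h2: "tri_cover_num E \<le> tri_cover_num E' + card X" using Y(3) by simp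
  obtain P where P: "packing E' P" "card P = tri_packing_num E'" using nu_ex[OF fE'] by blast
  have fP: "finite P" using P(1) finite_triangles[OF fE'] unfolding packing_def
    using finite_subset by blast
  have fP0: "finite P0" using P0 finite_triangles[OF fE] unfolding packing_def
    using finite_subset by blast
  have PT: "P \<subseteq> triangles E'" using P(1) unfolding packing_def by simp
  have P0T: "P0 \<subseteq> triangles E" using P0 unfolding packing_def by simp
  have PE': "\<forall>T\<in>P. T \<subseteq> E'" using PT triangles_sub by blast
  have disj: "P \<inter> P0 = {}"
  proof -
    { fix T assume T: "T \<in> P" "T \<in> P0"
      have "T \<subseteq> E'" using PE' T(1) by blast
      moreover have "T \<subseteq> S" using P0S T(2) by blast
      moreover have "T \<noteq> {}" using T(2) P0T triangles_ne by blast
      ultimately have False unfolding E'_def by blast }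
    thus ?thesis by blast
  qed
  have "packing E (P \<union> P0)"
  proof -
    have "triangles E' \<subseteq> triangles E" using triangles_mono E'_def by blast
    moreover have "\<forall>S\<in>P. \<forall>T\<in>P0. S \<inter> T = {}" using PE' P0S unfolding E'_def by fast
    ultimately have sub: "P \<union> P0 \<subseteq> triangles E" using PT P0T by blast
    have d1: "\<forall>S\<in>P. \<forall>T\<in>P. S \<noteq> T \<longrightarrow> S \<inter> T = {}" using P(1) unfolding packing_def by simp
    have d2: "\<forall>S\<in>P0. \<forall>T\<in>P0. S \<noteq> T \<longrightarrow> S \<inter> T = {}" using P0 unfolding packing_def by simp
    have d3: "\<forall>S\<in>P. \<forall>T\<in>P0. S \<inter> T = {}" by fact
    have "\<forall>S\<in>P \<union> P0. \<forall>T\<in>P \<union> P0. S \<noteq> T \<longrightarrow> S \<inter> T = {}"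
    proof (intro ballI impI)
      fix S T assume "S \<in> P \<union> P0" "T \<in> P \<union> P0" "S \<noteq> T"
      thus "S \<inter> T = {}" using d1 d2 d3 by (metis Int_commute Un_iff)
    qed
    thus ?thesis using sub unfolding packing_def by simp
  qed
  hence "card (P \<union> P0) \<le> tri_packing_num E" using nu_ge[OF fE] by blast
  hence "tri_packing_num E' + card P0 \<le> tri_packing_num E"
    using card_Un_disjoint[OF fP fP0 disj] P(2) by simp
  thus False using h1 h2 Xc A2 by linarith
qed

definition mc :: "'a set \<Rightarrow> 'a set set \<Rightarrow> bool" where
  "mc V E \<longleftrightarrow> simple_graph V E \<and> tri_cover_num E > 2 * tri_packing_num E \<and>
    (\<forall>V' E'. proper_subgraph V' E' V E \<longrightarrow> tri_cover_num E' \<le> 2 * tri_packing_num E')"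

lemma reduce':
  assumes "mc V E"
    and "S \<subseteq> E" "S \<noteq> {}" "packing E P0" "\<forall>T\<in>P0. T \<subseteq> S" "X \<subseteq> E" "card X \<le> 2 * card P0"
    and "\<And>p q w. {p,q} \<in> S \<Longrightarrow> p \<noteq> q \<Longrightarrow> {p,w} \<in> E \<Longrightarrow> {q,w} \<in> E \<Longrightarrow> w \<noteq> p \<Longrightarrow> w \<noteq> q
        \<Longrightarrow> {p,q} \<in> X \<or> {q,w} \<in> X \<or> {p,w} \<in> X"
  shows False
  using assms unfolding mc_def by (intro reduce[of V E S P0 X]) blast+

lemma triI: "a \<noteq> b \<Longrightarrow> b \<noteq> c \<Longrightarrow> a \<noteq> c \<Longrightarrow> {a,b} \<in> E \<Longrightarrow> {b,c} \<in> E \<Longrightarrow> {a,c} \<in> E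
  \<Longrightarrow> {{a,b},{b,c},{a,c}} \<in> triangles E"
  by (unfold triangles_def, rule CollectI, rule exI[of _ a], rule exI[of _ b], rule exI[of _ c]) simp

lemma sg_ne: "simple_graph V E \<Longrightarrow> {a,b} \<in> E \<Longrightarrow> a \<noteq> b"
  unfolding simple_graph_def by fastforce

lemma nb: "u \<in> nbhd E v \<longleftrightarrow> {v,u} \<in> E"
  unfolding nbhd_def by (simp add: insert_commute)

lemma card2: "card {a,b} \<le> 2"
  by (cases "a = b") auto

lemma case_leaf:
  assumes mc: "mc V E" and x: "x \<in> nbhd E v" and y: "y \<in> nbhd E v" and xy: "{x,y} \<in> E"
    and leaf: "\<forall>w\<in>nbhd E v. {y,w} \<in> E \<longrightarrow> w = x"
  shows False
proof -
  have sg: "simple_graph V E" using mc mc_def by blast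
  have e: "{v,x} \<in> E" "{v,y} \<in> E" using x y by (simp_all only: nb)
  have d: "v \<noteq> x" "v \<noteq> y" "x \<noteq> y" using sg_ne[OF sg e(1)] sg_ne[OF sg e(2)] sg_ne[OF sg xy] .
  let ?T = "{{v,x},{x,y},{v,y}}"
  have T: "?T \<in> triangles E" using d e xy by (intro triI)
  show False
  proof (rule reduce'[OF mc, of ?T "{?T}" "{{x,y},{v,x}}"])
    show "?T \<subseteq> E" using e xy by blast
    show "?T \<noteq> {}" by blast
    show "packing E {?T}" using T unfolding packing_def by simp
    show "\<forall>T\<in>{?T}. T \<subseteq> ?T" by blast
    show "{{x,y},{v,x}} \<subseteq> E" using e xy by blast
    show "card {{x,y},{v,x}} \<le> 2 * card {?T}" using card2[of "{x,y}" "{v,x}"] by simp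
  next
    fix p q w assume pq: "{p,q} \<in> ?T" "p \<noteq> q" "{p,w} \<in> E" "{q,w} \<in> E" "w \<noteq> p" "w \<noteq> q"
    show "{p,q} \<in> {{x,y},{v,x}} \<or> {q,w} \<in> {{x,y},{v,x}} \<or> {p,w} \<in> {{x,y},{v,x}}"
    proof (cases "{p,q} = {v,y}")
      case True
      hence "(p = v \<and> q = y) \<or> (p = y \<and> q = v)" by (metis doubleton_eq_iff)
      thus ?thesis
      proof
        assume a: "p = v \<and> q = y"
        have "w \<in> nbhd E v" "{y,w} \<in> E" using pq(3,4) a by (simp_all add: nb)
        hence "w = x" using leaf by blast
        thus ?thesis using a by simp
      next
        assume a: "p = y \<and> q = v"
        have "w \<in> nbhd E v" "{y,w} \<in> E" using pq(3,4) a by (simp_all add: nb)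
        hence "w = x" using leaf by blast
        thus ?thesis using a by simp
      qed
    next
      case False
      thus ?thesis using pq(1) by (simp only: insert_iff empty_iff simp_thms) metis
    qed
  qed
qed

lemma case_iso:
  assumes mc: "mc V E" and x: "x \<in> nbhd E v"
    and iso: "\<forall>w\<in>nbhd E v. {x,w} \<notin> E"
  shows False
proof (rule reduce'[OF mc, of "{{v,x}}" "{}" "{}"])
  show "{{v,x}} \<subseteq> E" using x by (auto simp: nb)
  show "packing E {}" unfolding packing_def by simp
next
  fix p q w assume pq: "{p,q} \<in> {{v,x}}" "p \<noteq> q" "{p,w} \<in> E" "{q,w} \<in> E" "w \<noteq> p" "w \<noteq> q"
  hence "(p = v \<and> q = x) \<or> (p = x \<and> q = v)" by (auto simp: doubleton_eq_iff)
  hence "w \<in> nbhd E v \<and> {x,w} \<in> E" using pq by (auto simp: nb)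
  thus "{p,q} \<in> {} \<or> {q,w} \<in> {} \<or> {p,w} \<in> {}" using iso by blast
qed auto

lemma case_small:
  assumes mc: "mc V E" and x: "x \<in> nbhd E v" and y: "y \<in> nbhd E v" and xy: "{x,y} \<in> E"
    and z: "z \<in> nbhd E v"
    and cl: "\<forall>w\<in>nbhd E v. ({x,w} \<in> E \<or> {y,w} \<in> E) \<longrightarrow> w = x \<or> w = y \<or> w = z"
  shows False
proof -
  have sg: "simple_graph V E" using mc mc_def by blast
  have e: "{v,x} \<in> E" "{v,y} \<in> E" "{v,z} \<in> E" using x y z by (simp_all only: nb)
  have d: "v \<noteq> x" "v \<noteq> y" "x \<noteq> y" using sg_ne[OF sg e(1)] sg_ne[OF sg e(2)] sg_ne[OF sg xy] .
  let ?T = "{{v,x},{x,y},{v,y}}"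
  have T: "?T \<in> triangles E" using d e xy by (intro triI)
  show False
  proof (rule reduce'[OF mc, of ?T "{?T}" "{{x,y},{v,z}}"])
    show "?T \<subseteq> E" using e xy by blast
    show "?T \<noteq> {}" by blast
    show "packing E {?T}" using T unfolding packing_def by simp
    show "\<forall>T\<in>{?T}. T \<subseteq> ?T" by blast
    show "{{x,y},{v,z}} \<subseteq> E" using e xy by blast
    show "card {{x,y},{v,z}} \<le> 2 * card {?T}" using card2[of "{x,y}" "{v,z}"] by simp
  next
    fix p q w assume pq: "{p,q} \<in> ?T" "p \<noteq> q" "{p,w} \<in> E" "{q,w} \<in> E" "w \<noteq> p" "w \<noteq> q"
    have P: "(p=v \<and> q=x \<or> p=x \<and> q=v) \<or> (p=x \<and> q=y \<or> p=y \<and> q=x) \<or> (p=v \<and> q=y \<or> p=y \<and> q=v)"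
      using pq(1) by (simp only: insert_iff empty_iff doubleton_eq_iff simp_thms)
    have w1: "p = v \<Longrightarrow> w \<in> nbhd E v" using pq(3) by (simp add: nb)
    have w2: "q = v \<Longrightarrow> w \<in> nbhd E v" using pq(4) by (simp add: nb)
    have C: "w \<in> nbhd E v \<Longrightarrow> {x,w} \<in> E \<or> {y,w} \<in> E \<Longrightarrow> w = x \<or> w = y \<or> w = z" by (drule bspec[OF cl], erule mp, assumption)
    show "{p,q} \<in> {{x,y},{v,z}} \<or> {q,w} \<in> {{x,y},{v,z}} \<or> {p,w} \<in> {{x,y},{v,z}}"
      using P
    proof (elim disjE conjE)
      assume a: "p = v" "q = x"
      hence "w = y \<or> w = z" using C w1 pq(4,6) by blast
      thus ?thesis using a by auto
    next
      assume a: "p = x" "q = v"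
      hence "w = y \<or> w = z" using C w2 pq(3,5) by blast
      thus ?thesis using a by auto
    next
      assume a: "p = x" "q = y"
      thus ?thesis by auto
    next
      assume a: "p = y" "q = x"
      thus ?thesis by auto
    next
      assume a: "p = v" "q = y"
      hence "w = x \<or> w = z" using C w1 pq(4,6) by blast
      thus ?thesis using a by auto
    next
      assume a: "p = y" "q = v"
      hence "w = x \<or> w = z" using C w2 pq(3,5) by blast
      thus ?thesis using a by auto
    qed
  qed
qed

lemma card_ins: "finite A \<Longrightarrow> card (insert a A) \<le> Suc (card A)"
  by (simp add: card_insert_if)

lemma card4: "card {a,b,c,d} \<le> 4"
proof -
  have "card {d} \<le> 1" by simp
  hence "card {c,d} \<le> 2" using card_ins[of "{d}" c] by simp
  hence "card {b,c,d} \<le> 3" using card_ins[of "{c,d}" b] by simp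
  thus ?thesis using card_ins[of "{b,c,d}" a] by simp
qed

lemma case_match:
  assumes mc: "mc V E" and N: "a \<in> nbhd E v" "b \<in> nbhd E v" "c \<in> nbhd E v" "d \<in> nbhd E v"
    and dist: "a \<noteq> b" "a \<noteq> c" "a \<noteq> d" "b \<noteq> c" "b \<noteq> d" "c \<noteq> d"
    and ab: "{a,b} \<in> E" and cd: "{c,d} \<in> E"
    and cl: "\<forall>w\<in>nbhd E v. ({a,w} \<in> E \<or> {b,w} \<in> E \<or> {c,w} \<in> E \<or> {d,w} \<in> E)
               \<longrightarrow> w = a \<or> w = b \<or> w = c \<or> w = d"
  shows False
proof -
  have sg: "simple_graph V E" using mc mc_def by blast
  have e: "{v,a} \<in> E" "{v,b} \<in> E" "{v,c} \<in> E" "{v,d} \<in> E" using N by (simp_all only: nb)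
  have dv: "v \<noteq> a" "v \<noteq> b" "v \<noteq> c" "v \<noteq> d"
    using sg_ne[OF sg e(1)] sg_ne[OF sg e(2)] sg_ne[OF sg e(3)] sg_ne[OF sg e(4)] .
  define Tab where "Tab = {{v,a},{a,b},{v,b}}"
  define Tcd where "Tcd = {{v,c},{c,d},{v,d}}"
  define X where "X = {{a,b},{c,d},{v,a},{v,b}}"
  have Tab: "Tab \<in> triangles E" unfolding Tab_def using dv dist e ab by (intro triI)
  have Tcd: "Tcd \<in> triangles E" unfolding Tcd_def using dv dist e cd by (intro triI)
  have n1: "{v,a} \<notin> Tcd" "{a,b} \<notin> Tcd" "{v,b} \<notin> Tcd"
    unfolding Tcd_def using dv dist by (simp_all add: doubleton_eq_iff)
  have dj: "Tab \<inter> Tcd = {}" unfolding disjoint_iff Tab_def using n1 by simp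
  have ne: "Tab \<noteq> Tcd" using n1(1) unfolding Tab_def by blast
  have dj2: "Tcd \<inter> Tab = {}" using dj by (simp add: Int_commute)
  have H: "{v,t} \<in> X \<or> {t,w} \<in> X \<or> {v,w} \<in> X"
    if t: "t = a \<or> t = b \<or> t = c \<or> t = d" and w: "w = a \<or> w = b \<or> w = c \<or> w = d"
      and tw: "w \<noteq> t" for t w
  proof -
    have dc: "{d,c} = {c,d}" by (rule insert_commute)
    from t w tw show ?thesis unfolding X_def
      by (elim disjE) (simp_all add: dc)
  qed
  show False
  proof (rule reduce'[OF mc, of "Tab \<union> Tcd" "{Tab,Tcd}" X])
    show "Tab \<union> Tcd \<subseteq> E" unfolding Tab_def Tcd_def using e ab cd by blast
    show "Tab \<union> Tcd \<noteq> {}" unfolding Tab_def by blast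
    show "packing E {Tab,Tcd}" unfolding packing_def using Tab Tcd dj dj2 by simp
    show "\<forall>T\<in>{Tab,Tcd}. T \<subseteq> Tab \<union> Tcd" by simp
    show "X \<subseteq> E" unfolding X_def using e ab cd by blast
    show "card X \<le> 2 * card {Tab,Tcd}" using card4[of "{a,b}" "{c,d}" "{v,a}" "{v,b}"] ne
      unfolding X_def by simp
  next
    fix p q w assume pq: "{p,q} \<in> Tab \<union> Tcd" "p \<noteq> q" "{p,w} \<in> E" "{q,w} \<in> E" "w \<noteq> p" "w \<noteq> q"
    have G: "{p,q} \<in> X \<or> {q,w} \<in> X \<or> {p,w} \<in> X"
      if pt: "{p,q} = {v,t}" and t: "t = a \<or> t = b \<or> t = c \<or> t = d" for t
    proof -
      from pt have o: "(p = v \<and> q = t) \<or> (p = t \<and> q = v)" by (metis doubleton_eq_iff)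
      have vw: "{v,w} \<in> E" and tw: "{t,w} \<in> E" and wt: "w \<noteq> t"
        using o pq(3,4,5,6) by auto
      have wN: "w \<in> nbhd E v" using vw by (simp add: nb)
      have "({a,w} \<in> E \<or> {b,w} \<in> E \<or> {c,w} \<in> E \<or> {d,w} \<in> E)" using t tw by blast
      hence w: "w = a \<or> w = b \<or> w = c \<or> w = d" by (rule mp[OF bspec[OF cl wN]])
      from H[OF t w wt] o show ?thesis using pt by auto
    qed
    have "{p,q} = {a,b} \<or> {p,q} = {c,d} \<or> {p,q} = {v,a} \<or> {p,q} = {v,b} \<or> {p,q} = {v,c} \<or> {p,q} = {v,d}"
      using pq(1) unfolding Tab_def Tcd_def by (simp only: Un_iff insert_iff empty_iff simp_thms) metis
    thus "{p,q} \<in> X \<or> {q,w} \<in> X \<or> {p,w} \<in> X"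
    proof (elim disjE)
      assume "{p,q} = {a,b}" thus ?thesis unfolding X_def by simp
    next
      assume "{p,q} = {c,d}" thus ?thesis unfolding X_def by simp
    next
      assume h: "{p,q} = {v,a}" show ?thesis using G[OF h] by simp
    next
      assume h: "{p,q} = {v,b}" show ?thesis using G[OF h] by simp
    next
      assume h: "{p,q} = {v,c}" show ?thesis using G[OF h] by simp
    next
      assume h: "{p,q} = {v,d}" show ?thesis using G[OF h] by simp
    qed
  qed
qed

lemma pm_aux:
  fixes R :: "'a \<Rightarrow> 'a \<Rightarrow> bool"
  assumes d: "x \<noteq> p" "x \<noteq> q" "x \<noteq> r" "p \<noteq> q" "p \<noteq> r" "q \<noteq> r"
    and sym: "\<And>u w. R u w \<Longrightarrow> R w u" and irr: "\<And>u. \<not> R u u"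
    and nb1: "\<And>u. u \<in> {x,p,q,r} \<Longrightarrow> \<exists>w\<in>{x,p,q,r}. R u w"
    and nb2: "\<And>u w1. u \<in> {x,p,q,r} \<Longrightarrow> R u w1 \<Longrightarrow> \<exists>w2\<in>{x,p,q,r}. R u w2 \<and> w2 \<noteq> w1"
  shows "(R x p \<and> R q r) \<or> (R x q \<and> R p r) \<or> (R x r \<and> R p q)"
proof -
  have q2: "R q x \<and> R q p" if h: "\<not> R q r" "R q w1" "w1 \<in> {x,p,q,r}" for w1
  proof -
    obtain w2 where "w2 \<in> {x,p,q,r}" "R q w2" "w2 \<noteq> w1" using nb2[of q w1] h(2) by blast
    thus ?thesis using h irr[of q] by auto
  qed
  have r2: "R r x \<and> R r p" if h: "\<not> R r q" "R r w1" "w1 \<in> {x,p,q,r}" for w1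
  proof -
    obtain w2 where "w2 \<in> {x,p,q,r}" "R r w2" "w2 \<noteq> w1" using nb2[of r w1] h(2) by blast
    thus ?thesis using h irr[of r] by auto
  qed
  have p2: "R p x \<and> R p r" if h: "\<not> R p q" "R p w1" "w1 \<in> {x,p,q,r}" for w1
  proof -
    obtain w2 where "w2 \<in> {x,p,q,r}" "R p w2" "w2 \<noteq> w1" using nb2[of p w1] h(2) by blast
    thus ?thesis using h irr[of p] by auto
  qed
  have q2': "R q x \<and> R q r" if h: "\<not> R q p" "R q w1" "w1 \<in> {x,p,q,r}" for w1
  proof -
    obtain w2 where "w2 \<in> {x,p,q,r}" "R q w2" "w2 \<noteq> w1" using nb2[of q w1] h(2) by blast
    thus ?thesis using h irr[of q] by auto
  qed
  have r2': "R r x \<and> R r q" if h: "\<not> R r p" "R r w1" "w1 \<in> {x,p,q,r}" for w1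
  proof -
    obtain w2 where "w2 \<in> {x,p,q,r}" "R r w2" "w2 \<noteq> w1" using nb2[of r w1] h(2) by blast
    thus ?thesis using h irr[of r] by auto
  qed
  have p2': "R p x \<and> R p q" if h: "\<not> R p r" "R p w1" "w1 \<in> {x,p,q,r}" for w1
  proof -
    obtain w2 where "w2 \<in> {x,p,q,r}" "R p w2" "w2 \<noteq> w1" using nb2[of p w1] h(2) by blast
    thus ?thesis using h irr[of p] by auto
  qed
  obtain wq where wq: "wq \<in> {x,p,q,r}" "R q wq" using nb1[of q] by auto
  obtain wr where wr: "wr \<in> {x,p,q,r}" "R r wr" using nb1[of r] by auto
  obtain wp where wp: "wp \<in> {x,p,q,r}" "R p wp" using nb1[of p] by auto
  obtain wx where wx: "wx \<in> {x,p,q,r}" "R x wx" using nb1[of x] by auto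
  from wx(1) consider "wx = x" | "wx = p" | "wx = q" | "wx = r" by auto
  then show ?thesis
  proof cases
    case 1 thus ?thesis using wx irr by auto
  next
    case 2
    show ?thesis
    proof (cases "R q r")
      case True thus ?thesis using 2 wx by auto
    next
      case False
      have "R q x \<and> R q p" using q2[OF False wq(2,1)] .
      moreover have "R r x \<and> R r p" using r2[OF _ wr(2,1)] False sym by blast
      ultimately show ?thesis using sym by blast
    qed
  next
    case 3
    show ?thesis
    proof (cases "R p r")
      case True thus ?thesis using 3 wx by auto
    next
      case False
      have "R p x \<and> R p q" using p2'[OF False wp(2,1)] .
      moreover have "R r x \<and> R r q" using r2'[OF _ wr(2,1)] False sym by blast
      ultimately show ?thesis using sym by blast
    qed
  next
    case 4
    show ?thesis
    proof (cases "R p q")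
      case True thus ?thesis using 4 wx by auto
    next
      case False
      have "R p x \<and> R p r" using p2[OF False wp(2,1)] .
      moreover have "R q x \<and> R q r" using q2'[OF _ wq(2,1)] False sym by blast
      ultimately show ?thesis using sym by blast
    qed
  qed
qed



lemma comp_self: "x \<in> N \<Longrightarrow> x \<in> component N F x"
  unfolding component_def connected_in_def by simp

lemma comp_sub: "component N F x \<subseteq> N"
  unfolding component_def connected_in_def by blast

lemma comp_close:
  assumes "y \<in> component N (induced_edges E N) x" "w \<in> N" "{y,w} \<in> E"
  shows "w \<in> component N (induced_edges E N) x"
proof -
  let ?R = "{(u, w). {u, w} \<in> induced_edges E N \<and> u \<in> N \<and> w \<in> N}"
  have y: "x \<in> N" "y \<in> N" "(x,y) \<in> ?R\<^sup>*" using assms(1) unfolding component_def connected_in_def by auto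
  have "(y,w) \<in> ?R" using y(2) assms(2,3) unfolding induced_edges_def by simp
  hence "(x,w) \<in> ?R\<^sup>*" using y(3) by (rule rtrancl_into_rtrancl[rotated])
  thus ?thesis using y(1) assms(2) unfolding component_def connected_in_def by simp
qed

lemma comp_pred:
  assumes "y \<in> component N (induced_edges E N) x" "y \<noteq> x"
  shows "\<exists>w\<in>component N (induced_edges E N) x. {w,y} \<in> E"
proof -
  let ?R = "{(u, w). {u, w} \<in> induced_edges E N \<and> u \<in> N \<and> w \<in> N}"
  have y: "x \<in> N" "y \<in> N" "(x,y) \<in> ?R\<^sup>*" using assms(1) unfolding component_def connected_in_def by auto
  have "\<exists>z. (x,z) \<in> ?R\<^sup>* \<and> (z,y) \<in> ?R" using y(3)
  proof (cases rule: rtranclE)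
    case base thus ?thesis using assms(2) by simp
  next
    case (step z) thus ?thesis by blast
  qed
  then obtain z where z: "(x,z) \<in> ?R\<^sup>*" "(z,y) \<in> ?R" by blast
  have "z \<in> N" "{z,y} \<in> E" using z(2) unfolding induced_edges_def by auto
  moreover have "z \<in> component N (induced_edges E N) x"
    using z(1) y(1) \<open>z \<in> N\<close> unfolding component_def connected_in_def by simp
  ultimately show ?thesis by blast
qed

theorem lemma2p6:
  fixes V :: "'a set" and E :: "'a set set"
  assumes "simple_graph V E"
    and "tri_cover_num E > 2 * tri_packing_num E"
    and "\<And>V' E'. proper_subgraph V' E' V E \<Longrightarrow> tri_cover_num E' \<le> 2 * tri_packing_num E'"
  shows "robust V E"
proof (rule ccontr)
  have mc: "mc V E" using assms unfolding mc_def by blast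
  assume "\<not> robust V E"
  then obtain v x where xN0: "x \<in> nbhd E v"
    and small0: "card (component (nbhd E v) (induced_edges E (nbhd E v)) x) < 5"
    unfolding robust_def by auto
  define N where "N = nbhd E v"
  define C where "C = component N (induced_edges E N) x"
  have xN: "x \<in> N" using xN0 N_def by simp
  have small: "card C < 5" using small0 N_def C_def by simp
  have NV: "N \<subseteq> V"
  proof
    fix u assume "u \<in> N"
    hence "{u,v} \<in> E" unfolding N_def nbhd_def by simp
    hence "{u,v} \<subseteq> V" using assms(1) unfolding simple_graph_def by blast
    thus "u \<in> V" by simp
  qed
  have fV: "finite V" using assms(1) unfolding simple_graph_def by simp
  have fC: "finite C" using comp_sub[of N _ x] NV unfolding C_def by (meson finite_subset fV)
  have CN: "C \<subseteq> N" unfolding C_def by (rule comp_sub)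
  have xC: "x \<in> C" unfolding C_def using xN by (rule comp_self)
  have close: "w \<in> C" if "u \<in> C" "w \<in> N" "{u,w} \<in> E" for u w
    using comp_close[of u N E x w] that unfolding C_def by simp
  show False
  proof (cases "\<exists>y\<in>N. \<exists>x'\<in>N. {x',y} \<in> E \<and> (\<forall>w\<in>N. {y,w} \<in> E \<longrightarrow> w = x')")
    case True
    then obtain y x' where "y \<in> N" "x' \<in> N" "{x',y} \<in> E" "\<forall>w\<in>N. {y,w} \<in> E \<longrightarrow> w = x'" by blast
    thus False using case_leaf[OF mc, of x' v y] unfolding N_def by blast
  next
    case False
    hence noleaf: "\<And>y x'. y \<in> N \<Longrightarrow> x' \<in> N \<Longrightarrow> {x',y} \<in> E \<Longrightarrow> \<exists>w\<in>N. {y,w} \<in> E \<and> w \<noteq> x'"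
      by blast
    show False
    proof (cases "\<forall>w\<in>N. {x,w} \<notin> E")
      case True
      thus False using case_iso[OF mc, of x v] xN unfolding N_def by blast
    next
      case False
      then obtain y where y: "y \<in> N" "{x,y} \<in> E" by blast
      have yC: "y \<in> C" using close[OF xC y] .
      have xy: "x \<noteq> y" using sg_ne[OF assms(1) y(2)] .
      show False
      proof (cases "card C \<le> 3")
        case True
        have "card (C - {x,y}) \<le> Suc 0"
        proof -
          have "card (C - {x,y}) = card C - card {x,y}" using xC yC fC
            by (intro card_Diff_subset) auto
          thus ?thesis using True xy by simp
        qed
        then obtain z where z: "z \<in> N" "C - {x,y} \<subseteq> {z}"
        proof (cases "C - {x,y} = {}")
          case True thus ?thesis using that[of x] xN by blast
        next
          case False
          then obtain z where "z \<in> C - {x,y}" by blast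
          moreover have "\<forall>u\<in>C - {x,y}. u = z"
            using \<open>card (C - {x,y}) \<le> Suc 0\<close> calculation fC
            using card_le_Suc0_iff_eq[of "C - {x,y}"] by blast
          ultimately show ?thesis using that[of z] CN by blast
        qed
        have cl: "\<forall>w\<in>N. ({x,w} \<in> E \<or> {y,w} \<in> E) \<longrightarrow> w = x \<or> w = y \<or> w = z"
        proof (intro ballI impI)
          fix w assume w: "w \<in> N" "{x,w} \<in> E \<or> {y,w} \<in> E"
          hence "w \<in> C" using close xC yC by blast
          thus "w = x \<or> w = y \<or> w = z" using z(2) by blast
        qed
        show False using case_small[OF mc, of x v y z] xN y z(1) cl unfolding N_def by blast
      next
        case False
        hence c4: "card C = 4" using small by simp
        have nb1: "\<exists>w\<in>C. {u,w} \<in> E" if u: "u \<in> C" for u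
        proof (cases "u = x")
          case True thus ?thesis using yC y(2) by blast
        next
          case False
          then obtain w where "w \<in> C" "{w,u} \<in> E" using comp_pred[of u N E x] u False unfolding C_def by blast
          thus ?thesis by (metis insert_commute)
        qed
        have nb2: "\<exists>w2\<in>C. {u,w2} \<in> E \<and> w2 \<noteq> w1" if u: "u \<in> C" "{u,w1} \<in> E" for u w1
        proof (cases "w1 \<in> N")
          case True
          then obtain w2 where "w2 \<in> N" "{u,w2} \<in> E" "w2 \<noteq> w1"
            using noleaf[of u w1] u CN by (metis insert_commute subsetD)
          thus ?thesis using close[OF u(1)] by blast
        next
          case False
          obtain w where "w \<in> C" "{u,w} \<in> E" using nb1[OF u(1)] by blast
          moreover hence "w \<noteq> w1" using False CN by blast
          ultimately show ?thesis by blast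
        qed
        obtain p q r where C3: "C - {x} = {p,q,r}" "p \<noteq> q" "q \<noteq> r" "p \<noteq> r"
        proof -
          have "card (C - {x}) = 3" using c4 xC fC by simp
          thus ?thesis using that card_3_iff by metis
        qed
        have Ceq: "C = {x,p,q,r}" using C3(1) xC by blast
        have d: "x \<noteq> p" "x \<noteq> q" "x \<noteq> r" using C3(1) by blast+
        let ?R = "\<lambda>u w. {u,w} \<in> E"
        have PM: "(?R x p \<and> ?R q r) \<or> (?R x q \<and> ?R p r) \<or> (?R x r \<and> ?R p q)"
        proof (rule pm_aux[OF d(1) d(2) d(3) C3(2) C3(4) C3(3), of ?R])
          show "\<And>u w. ?R u w \<Longrightarrow> ?R w u" by (simp add: insert_commute)
          show "\<And>u. \<not> ?R u u" using sg_ne[OF assms(1)] by blast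
          show "\<And>u. u \<in> {x,p,q,r} \<Longrightarrow> \<exists>w\<in>{x,p,q,r}. ?R u w" using nb1 Ceq by simp
          show "\<And>u w1. u \<in> {x,p,q,r} \<Longrightarrow> ?R u w1 \<Longrightarrow> \<exists>w2\<in>{x,p,q,r}. ?R u w2 \<and> w2 \<noteq> w1"
            using nb2 Ceq by simp
        qed
        have CNs: "x \<in> nbhd E v" "p \<in> nbhd E v" "q \<in> nbhd E v" "r \<in> nbhd E v"
          using CN Ceq N_def by auto
        have cl0: "w = x \<or> w = p \<or> w = q \<or> w = r"
          if "w \<in> N" "{x,w} \<in> E \<or> {p,w} \<in> E \<or> {q,w} \<in> E \<or> {r,w} \<in> E" for w
        proof -
          have "w \<in> C" using that close Ceq by blast
          thus ?thesis using Ceq by blast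
        qed
        from PM show False
        proof (elim disjE conjE)
          assume "?R x p" "?R q r"
          thus False using case_match[OF mc CNs] d C3(2-4) cl0 unfolding N_def by blast
        next
          assume "?R x q" "?R p r"
          thus False using case_match[OF mc CNs(1,3,2,4)] d C3(2-4) cl0 unfolding N_def by blast
        next
          assume "?R x r" "?R p q"
          thus False using case_match[OF mc CNs(1,4,2,3)] d C3(2-4) cl0 unfolding N_def by blast
        qed
      qed
    qed
  qed
qed

end
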